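(* Let $n\ge3$ and let $U$ be a finite set with $|U|\ge n^{4n}$ and a fixed enumeration $U=\{v_1,\dots,v_{|U|}\}$. Let $V_1,\dots,V_n$ be i.i.d. random subsets of $U$, each obtained by including every element of $U$ independently with probability $\delta=\frac{1}{4n^2}$. For $t\in[n]$ let $P_t=\bigcap_{i=1}^{t-1}V_i$ (with $P_1=U$) and $S_t=\bigcap_{i=t}^n(U\setminus V_i)$, and when $P_t\ne\emptyset$ let $J_t=v_{r_t}$ with $r_t=\min\{r: v_r\in P_t\}$. Then $$\Pr\big(\text{for all }t\in[n]:\ P_t\ne\emptyset\ \text{and}\ J_t\in S_t\big)\ge\frac12.$$ *)

theory Defs
  imports "HOL-Probability.Probability"
begin

definition random_subset :: "'a set \<Rightarrow> real \<Rightarrow> 'a set pmf" where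
  "random_subset U p = map_pmf (\<lambda>f. {x \<in> U. f x}) (Pi_pmf U False (\<lambda>_. bernoulli_pmf p))"

definition iid_subsets :: "nat \<Rightarrow> 'a set \<Rightarrow> real \<Rightarrow> (nat \<Rightarrow> 'a set) pmf" where
  "iid_subsets n U p = Pi_pmf {1..n} {} (\<lambda>_. random_subset U p)"

definition Pset :: "'a set \<Rightarrow> (nat \<Rightarrow> 'a set) \<Rightarrow> nat \<Rightarrow> 'a set" where
  "Pset U V t = U \<inter> (\<Inter>i\<in>{1..<t}. V i)"

definition Sset :: "'a set \<Rightarrow> nat \<Rightarrow> (nat \<Rightarrow> 'a set) \<Rightarrow> nat \<Rightarrow> 'a set" where
  "Sset U n V t = (\<Inter>i\<in>{t..n}. U - V i)"

definition Jelem :: "'a set \<Rightarrow> (nat \<Rightarrow> 'a) \<Rightarrow> (nat \<Rightarrow> 'a set) \<Rightarrow> nat \<Rightarrow> 'a" where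
  "Jelem U v V t = v (LEAST r. r \<in> {1..card U} \<and> v r \<in> Pset U V t)"

end

theory Submission
  imports Defs
begin

lemma Pi_pmf_curry:
  assumes "finite A" "finite B"
  shows "Pi_pmf A (\<lambda>_. d) (\<lambda>_. Pi_pmf B d (\<lambda>_. q)) = map_pmf curry (Pi_pmf (A \<times> B) d (\<lambda>_. q))"
proof (rule pmf_eqI)
  fix H :: "'a \<Rightarrow> 'b \<Rightarrow> 'c"
  have inj: "inj (curry :: ('a \<times> 'b \<Rightarrow> 'c) \<Rightarrow> _)"
    by (intro injI) (metis case_prod_curry)
  have "pmf (map_pmf curry (Pi_pmf (A \<times> B) d (\<lambda>_. q))) H
      = pmf (map_pmf curry (Pi_pmf (A \<times> B) d (\<lambda>_. q))) (curry (case_prod H))" by simp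
  also have "\<dots> = pmf (Pi_pmf (A \<times> B) d (\<lambda>_. q)) (case_prod H)"
    by (rule pmf_map_inj'[OF inj])
  finally have R: "pmf (map_pmf curry (Pi_pmf (A \<times> B) d (\<lambda>_. q))) H = pmf (Pi_pmf (A \<times> B) d (\<lambda>_. q)) (case_prod H)" .
  show "pmf (Pi_pmf A (\<lambda>_. d) (\<lambda>_. Pi_pmf B d (\<lambda>_. q))) H = pmf (map_pmf curry (Pi_pmf (A \<times> B) d (\<lambda>_. q))) H"
  proof (cases "\<forall>x. x \<notin> A \<times> B \<longrightarrow> case_prod H x = d")
    case True
    then have c1: "\<forall>a. a \<notin> A \<longrightarrow> H a = (\<lambda>_. d)" by (auto simp: fun_eq_iff)
    from True have c2: "\<forall>a\<in>A. \<forall>b. b \<notin> B \<longrightarrow> H a b = d" by auto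
    have "pmf (Pi_pmf A (\<lambda>_. d) (\<lambda>_. Pi_pmf B d (\<lambda>_. q))) H = (\<Prod>a\<in>A. pmf (Pi_pmf B d (\<lambda>_. q)) (H a))"
      using c1 assms by (simp add: pmf_Pi)
    also have "\<dots> = (\<Prod>a\<in>A. \<Prod>b\<in>B. pmf q (H a b))"
      using c2 assms by (intro prod.cong refl) (simp add: pmf_Pi)
    also have "\<dots> = (\<Prod>x\<in>A \<times> B. pmf q (case_prod H x))"
      by (simp add: prod.cartesian_product case_prod_beta')
    also have "\<dots> = pmf (Pi_pmf (A \<times> B) d (\<lambda>_. q)) (case_prod H)"
      using True assms by (simp add: pmf_Pi)
    finally show ?thesis using R by simp
  next
    case False
    then obtain a b where ab: "(a,b) \<notin> A \<times> B" "H a b \<noteq> d" by auto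
    have r0: "pmf (Pi_pmf (A \<times> B) d (\<lambda>_. q)) (case_prod H) = 0"
      using False assms by (subst pmf_Pi) auto
    have "pmf (Pi_pmf A (\<lambda>_. d) (\<lambda>_. Pi_pmf B d (\<lambda>_. q))) H = 0"
    proof (cases "a \<in> A")
      case False
      then have "\<not> (\<forall>x. x \<notin> A \<longrightarrow> H x = (\<lambda>_. d))" using ab by (metis)
      then show ?thesis using assms by (subst pmf_Pi) auto
    next
      case True
      then have "b \<notin> B" using ab by auto
      then have "pmf (Pi_pmf B d (\<lambda>_. q)) (H a) = 0" using ab assms by (auto simp: pmf_Pi)
      then have "(\<Prod>a\<in>A. pmf (Pi_pmf B d (\<lambda>_. q)) (H a)) = 0"
        using True assms by (intro prod_zero) auto
      then show ?thesis using assms by (subst pmf_Pi) auto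
    qed
    then show ?thesis using R r0 by simp
  qed
qed

lemma Pi_pmf_uncurry:
  assumes "finite A" "finite B"
  shows "Pi_pmf (A \<times> B) d (\<lambda>_. q) = map_pmf case_prod (Pi_pmf A (\<lambda>_. d) (\<lambda>_. Pi_pmf B d (\<lambda>_. q)))"
  by (simp add: Pi_pmf_curry[OF assms] pmf.map_comp o_def)

lemma iid_repr:
  assumes "finite I" "finite U"
  shows "Pi_pmf I {} (\<lambda>_. random_subset U p) =
    map_pmf (\<lambda>G i. {x\<in>U. G x i}) (Pi_pmf U (\<lambda>_. False) (\<lambda>_. Pi_pmf I False (\<lambda>_. bernoulli_pmf p)))"
proof -
  let ?b = "bernoulli_pmf p"
  let ?f = "\<lambda>g. {x\<in>U. g x}"
  have "Pi_pmf I {} (\<lambda>_. random_subset U p) = Pi_pmf I {} (\<lambda>_. map_pmf ?f (Pi_pmf U False (\<lambda>_. ?b)))"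
    unfolding random_subset_def by simp
  also have "\<dots> = map_pmf (\<lambda>h. ?f \<circ> h) (Pi_pmf I (\<lambda>_. False) (\<lambda>_. Pi_pmf U False (\<lambda>_. ?b)))"
    by (rule Pi_pmf_map) (use assms in auto)
  also have "\<dots> = map_pmf (\<lambda>h. ?f \<circ> h) (map_pmf curry (Pi_pmf (I \<times> U) False (\<lambda>_. ?b)))"
    by (simp add: Pi_pmf_curry assms)
  also have "Pi_pmf (I \<times> U) False (\<lambda>_. ?b) = map_pmf (\<lambda>g. g \<circ> prod.swap) (Pi_pmf (U \<times> I) False (\<lambda>_. ?b))"
  proof (rule Pi_pmf_bij_betw)
    show "finite (I \<times> U)" using assms by simp
    show "bij_betw prod.swap (I \<times> U) (U \<times> I)"
      by (rule bij_betwI[where g=prod.swap]) auto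
    show "\<And>x. x \<notin> I \<times> U \<Longrightarrow> prod.swap x \<notin> U \<times> I" by auto
  qed
  also have "Pi_pmf (U \<times> I) False (\<lambda>_. ?b) = map_pmf case_prod (Pi_pmf U (\<lambda>_. False) (\<lambda>_. Pi_pmf I False (\<lambda>_. ?b)))"
    by (rule Pi_pmf_uncurry) (use assms in auto)
  finally show ?thesis
    by (simp add: pmf.map_comp o_def)
qed

lemma prob_mem_random_subset:
  assumes "finite U" "0 \<le> p" "p \<le> 1"
  shows "measure_pmf.prob (random_subset U p) {y. a \<in> y} \<le> p"
proof (cases "a \<in> U")
  case True
  have "measure_pmf.prob (random_subset U p) {y. a \<in> y}
      = measure_pmf.prob (map_pmf (\<lambda>f. f a) (Pi_pmf U False (\<lambda>_. bernoulli_pmf p))) {True}"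
    unfolding random_subset_def measure_map_pmf using True by (intro arg_cong[where f="measure_pmf.prob _"]) auto
  also have "\<dots> = p" using True assms by (simp add: Pi_pmf_component measure_pmf_single)
  finally show ?thesis by simp
next
  case False
  have "measure_pmf.prob (random_subset U p) {y. a \<in> y} = measure_pmf.prob (Pi_pmf U False (\<lambda>_. bernoulli_pmf p)) {}"
    unfolding random_subset_def measure_map_pmf using False by (intro arg_cong[where f="measure_pmf.prob _"]) auto
  then show ?thesis using assms by simp
qed

lemma prob_indep_component:
  assumes "finite A" "x \<in> A" "\<And>f y. g (f(x:=y)) = g f"
    and "\<And>a. measure_pmf.prob (p x) {y. a \<in> y} \<le> c"
  shows "measure_pmf.prob (Pi_pmf A d p) {f. g f \<in> f x} \<le> c"
proof -
  have A: "A = insert x (A - {x})" using assms by auto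
  have c0: "0 \<le> c" using assms(4)[of undefined] by (meson measure_nonneg order_trans)
  have "Pi_pmf A d p = do {y \<leftarrow> p x; f \<leftarrow> Pi_pmf (A - {x}) d p; return_pmf (f(x := y))}"
    by (subst A, subst Pi_pmf_insert') (use assms in auto)
  also have "\<dots> = do {f \<leftarrow> Pi_pmf (A - {x}) d p; y \<leftarrow> p x; return_pmf (f(x := y))}"
    by (rule bind_commute_pmf)
  finally have eq: "Pi_pmf A d p = \<dots>" .
  have "emeasure (measure_pmf (Pi_pmf A d p)) {f. g f \<in> f x}
     = (\<integral>\<^sup>+f. emeasure (measure_pmf (p x \<bind> (\<lambda>y. return_pmf (f(x := y))))) {f. g f \<in> f x} \<partial>measure_pmf (Pi_pmf (A - {x}) d p))"
    by (subst eq) simp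
  also have "\<dots> \<le> (\<integral>\<^sup>+f. ennreal c \<partial>measure_pmf (Pi_pmf (A - {x}) d p))"
  proof (rule nn_integral_mono)
    fix f
    have "p x \<bind> (\<lambda>y. return_pmf (f(x := y))) = map_pmf (\<lambda>y. f(x := y)) (p x)"
      by (simp add: map_pmf_def)
    then have "emeasure (measure_pmf (p x \<bind> (\<lambda>y. return_pmf (f(x := y))))) {f. g f \<in> f x}
        = ennreal (measure_pmf.prob (p x) {y. g f \<in> y})"
      using assms(3) by (simp add: measure_pmf.emeasure_eq_measure measure_map_pmf vimage_def)
    also have "\<dots> \<le> ennreal c" using assms(4) by (simp add: ennreal_leI)
    finally show "emeasure (measure_pmf (p x \<bind> (\<lambda>y. return_pmf (f(x := y))))) {f. g f \<in> f x} \<le> ennreal c" .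
  qed
  also have "\<dots> = ennreal c" by (simp add: measure_pmf.emeasure_space_1)
  finally show ?thesis using c0 by (simp add: measure_pmf.emeasure_eq_measure)
qed

lemma delta_le1: "(3::nat) \<le> n \<Longrightarrow> 1 \<le> 4 * (real n)\<^sup>2"
proof -
  assume "3 \<le> n"
  then have "1 \<le> real n" by simp
  then have "1 \<le> (real n)\<^sup>2" by (simp add: one_le_power)
  then show ?thesis by simp
qed

lemma E0_bound:
  fixes n :: nat and U :: "'a set"
  assumes n3: "n \<ge> 3" and fin: "finite U" and cardU: "card U \<ge> n ^ (4 * n)"
  shows "measure_pmf.prob (iid_subsets n U (1 / (4 * real n ^ 2))) {V. Pset U V n = {}} \<le> 1/4"
proof -
  define \<delta> where "\<delta> = 1 / (4 * real n ^ 2)"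
  have d0: "0 \<le> \<delta>" and d1: "\<delta> \<le> 1" using n3 delta_le1[OF n3] by (auto simp: \<delta>_def field_simps)
  define C where "C = {g::nat\<Rightarrow>bool. \<exists>i\<in>{1..<n}. \<not> g i}"
  let ?Q = "Pi_pmf {1..n} False (\<lambda>_. bernoulli_pmf \<delta>)"
  have "measure_pmf.prob (iid_subsets n U \<delta>) {V. Pset U V n = {}}
      = measure_pmf.prob (Pi_pmf U (\<lambda>_. False) (\<lambda>_. ?Q)) (Pi U (\<lambda>_. C))"
    unfolding iid_subsets_def iid_repr[OF finite_atLeastAtMost fin] measure_map_pmf
    by (intro arg_cong[where f="measure_pmf.prob _"]) (auto simp: Pset_def C_def Pi_def)
  also have "\<dots> = (\<Prod>u\<in>U. measure_pmf.prob ?Q C)"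
    using fin by (simp add: measure_Pi_pmf_Pi)
  also have "measure_pmf.prob ?Q C = 1 - measure_pmf.prob ?Q (Pi {1..n} (\<lambda>i. if i \<in> {1..<n} then {True} else UNIV))"
  proof -
    have "C = - (Pi {1..n} (\<lambda>i. if i \<in> {1..<n} then {True} else UNIV))"
      by (auto simp: C_def Pi_def)
    then show ?thesis
      using measure_pmf.prob_compl[of "Pi {1..n} (\<lambda>i. if i \<in> {1..<n} then {True} else UNIV)" ?Q]
      by (simp add: Compl_eq_Diff_UNIV)
  qed
  also have "measure_pmf.prob ?Q (Pi {1..n} (\<lambda>i. if i \<in> {1..<n} then {True} else UNIV))
      = (\<Prod>i\<in>{1..n}. measure_pmf.prob (bernoulli_pmf \<delta>) (if i \<in> {1..<n} then {True} else UNIV))"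
    by (simp add: measure_Pi_pmf_Pi)
  also have "\<dots> = (\<Prod>i\<in>{1..n}. if i \<in> {1..<n} then \<delta> else 1)"
    using d0 d1 by (intro prod.cong refl) (auto simp: measure_pmf_single)
  also have "\<dots> = \<delta> ^ (n - 1)"
  proof -
    have "{1..n} \<inter> {i. i \<in> {1..<n}} = {1..<n}" by auto
    have "(\<Prod>i\<in>{1..n}. if i \<in> {1..<n} then \<delta> else 1) = (\<Prod>i\<in>{1..<n}. \<delta>)"
      by (rule prod.mono_neutral_cong_right) auto
    then show ?thesis by simp
  qed
  finally have eq: "measure_pmf.prob (iid_subsets n U \<delta>) {V. Pset U V n = {}} = (1 - \<delta> ^ (n - 1)) ^ card U"
    by simp
  define x where "x = \<delta> ^ (n - 1)"
  define N where "N = card U"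
  have x0: "0 \<le> x" and x1: "x \<le> 1" using d0 d1 by (auto simp: x_def power_le_one)
  have Nx: "3 \<le> real N * x"
  proof -
    have a: "4 * n^2 \<le> n^4"
    proof -
      have "4 \<le> n^2" using power_mono[of 3 n 2] n3 by simp
      then have "4 * n^2 \<le> n^2 * n^2" by (rule mult_right_mono) simp
      also have "n^2 * n^2 = n^4" by (simp flip: power_add)
      finally show ?thesis .
    qed
    have "(4 * n^2) ^ (n-1) \<le> (n^4) ^ (n-1)" by (rule power_mono[OF a]) simp
    also have "\<dots> = n ^ (4*n - 4)" by (simp add: power_mult[symmetric] algebra_simps)
    finally have b: "(4 * n^2) ^ (n-1) \<le> n ^ (4*n - 4)" .
    have "3 * n ^ (4*n-4) \<le> n^4 * n^(4*n-4)"
      using n3 by (intro mult_right_mono) (auto intro: order_trans[OF _ power_mono[of 3 n 4]])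
    also have "\<dots> = n^(4*n)" using n3 by (simp add: power_add[symmetric])
    finally have c: "3 * n ^ (4*n-4) \<le> N" using cardU N_def by simp
    have "3 * (4 * n^2) ^ (n-1) \<le> 3 * n ^ (4*n-4)" using b by simp
    then have "3 * (4 * n^2) ^ (n-1) \<le> N" using c by linarith
    then have "real (3 * (4 * n^2) ^ (n-1)) \<le> real N" by (simp only: of_nat_le_iff)
    then have "3 * (4 * real n ^ 2) ^ (n-1) \<le> real N" by simp
    moreover have "(4 * real n ^ 2) ^ (n-1) * x = 1"
      using n3 by (simp add: x_def \<delta>_def power_one_over[symmetric] power_divide)
    ultimately have "3 * (4 * real n ^ 2) ^ (n-1) * x \<le> real N * x"
      using x0 by (intro mult_right_mono) auto
    then show ?thesis using \<open>(4 * real n ^ 2) ^ (n-1) * x = 1\<close> by (simp add: mult.assoc)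
  qed
  have "(1 - x) ^ N * (1 + x) ^ N \<le> 1"
  proof -
    have e1: "(1 - x) ^ N * (1 + x) ^ N = ((1 - x) * (1 + x)) ^ N" by (simp add: power_mult_distrib)
    have e2: "(1 - x) * (1 + x) = 1 - x^2" by (simp add: algebra_simps power2_eq_square)
    have "x^2 \<le> 1" using x0 x1 by (simp add: power_le_one)
    moreover have "0 \<le> x^2" by simp
    ultimately have "(1 - x^2) ^ N \<le> 1" by (intro power_le_one) linarith+
    then show ?thesis using e1 e2 by simp
  qed
  moreover have "1 + real N * x \<le> (1 + x) ^ N" using Bernoulli_inequality[of x N] x0 by simp
  moreover have "0 \<le> (1 - x) ^ N" using x1 by simp
  ultimately have "(1 - x) ^ N * (1 + real N * x) \<le> 1"
    using mult_left_mono[of "1 + real N * x" "(1 + x) ^ N" "(1 - x) ^ N"] by linarith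
  moreover have "(1 - x) ^ N * 4 \<le> (1 - x) ^ N * (1 + real N * x)"
    using Nx \<open>0 \<le> (1 - x) ^ N\<close> by (intro mult_left_mono) auto
  ultimately have "(1 - x) ^ N * 4 \<le> 1" by linarith
  then show ?thesis using eq by (simp add: x_def N_def \<delta>_def)
qed

theorem mainTheorem7:
  fixes n :: nat and U :: "'a set" and v :: "nat \<Rightarrow> 'a"
  assumes "n \<ge> 3"
    and "finite U"
    and "card U \<ge> n ^ (4 * n)"
    and "bij_betw v {1..card U} U"
  shows "measure_pmf.prob (iid_subsets n U (1 / (4 * real n ^ 2)))
           {V. \<forall>t\<in>{1..n}. Pset U V t \<noteq> {} \<and> Jelem U v V t \<in> Sset U n V t}
         \<ge> 1 / 2"
proof -
  define \<delta> where "\<delta> = 1 / (4 * real n ^ 2)"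
  have d0: "0 \<le> \<delta>" and d1: "\<delta> \<le> 1" using assms(1) delta_le1[OF assms(1)] by (auto simp: \<delta>_def field_simps)
  define M where "M = iid_subsets n U \<delta>"
  define G where "G = {V. \<forall>t\<in>{1..n}. Pset U V t \<noteq> {} \<and> Jelem U v V t \<in> Sset U n V t}"
  define T where "T = {(t, i). t \<in> {1..n} \<and> i \<in> {t..n}}"
  define E where "E = (\<lambda>(t, i). {V. Jelem U v V t \<in> V i})"
  define E0 where "E0 = {V. Pset U V n = {}}"
  have finT: "finite T" by (rule finite_subset[of _ "{1..n} \<times> {1..n}"]) (auto simp: T_def)
  have cardT: "card T \<le> n^2"
  proof -
    have "card T \<le> card ({1..n} \<times> {1..n})" by (rule card_mono) (auto simp: T_def)
    then show ?thesis by (simp add: power2_eq_square)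
  qed
  have sub: "- G \<subseteq> E0 \<union> (\<Union>p\<in>T. E p)"
  proof
    fix V assume "V \<in> - G"
    then obtain t where t: "t \<in> {1..n}" and bad: "\<not> (Pset U V t \<noteq> {} \<and> Jelem U v V t \<in> Sset U n V t)"
      by (auto simp: G_def)
    show "V \<in> E0 \<union> (\<Union>p\<in>T. E p)"
    proof (cases "Pset U V t = {}")
      case True
      have "Pset U V n \<subseteq> Pset U V t" using t by (auto simp: Pset_def)
      then show ?thesis using True by (auto simp: E0_def)
    next
      case False
      then obtain u where u: "u \<in> Pset U V t" by auto
      then have "u \<in> U" by (auto simp: Pset_def)
      then obtain r where r: "r \<in> {1..card U}" "v r = u" using assms(4) by (metis bij_betw_iff_bijections)
      have "(LEAST r. r \<in> {1..card U} \<and> v r \<in> Pset U V t) \<in> {1..card U} \<and> v (LEAST r. r \<in> {1..card U} \<and> v r \<in> Pset U V t) \<in> Pset U V t"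
        by (rule LeastI[of _ r]) (use r u in auto)
      then have JP: "Jelem U v V t \<in> Pset U V t" by (simp add: Jelem_def)
      then have JU: "Jelem U v V t \<in> U" by (auto simp: Pset_def)
      from bad False have "Jelem U v V t \<notin> Sset U n V t" by auto
      then obtain i where "i \<in> {t..n}" "Jelem U v V t \<in> V i" using JU t by (auto simp: Sset_def)
      then have "(t, i) \<in> T" "V \<in> E (t, i)" using t by (auto simp: T_def E_def)
      then show ?thesis by blast
    qed
  qed
  have E0b: "measure_pmf.prob M E0 \<le> 1/4"
    unfolding M_def E0_def \<delta>_def by (rule E0_bound) (use assms in auto)
  have Eb: "measure_pmf.prob M (E p) \<le> \<delta>" if "p \<in> T" for p
  proof -
    obtain t i where p: "p = (t, i)" and t: "t \<in> {1..n}" and i: "i \<in> {t..n}" using \<open>p \<in> T\<close> by (auto simp: T_def)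
    have "measure_pmf.prob (Pi_pmf {1..n} {} (\<lambda>_. random_subset U \<delta>)) {V. Jelem U v V t \<in> V i} \<le> \<delta>"
    proof (rule prob_indep_component)
      show "i \<in> {1..n}" using t i by auto
      show "Jelem U v (V(i := y)) t = Jelem U v V t" for V y
      proof -
        have "(\<Inter>j\<in>{1..<t}. (V(i := y)) j) = (\<Inter>j\<in>{1..<t}. V j)" using i by (intro INF_cong) auto
        then show ?thesis by (simp add: Jelem_def Pset_def)
      qed
      show "measure_pmf.prob (random_subset U \<delta>) {y. a \<in> y} \<le> \<delta>" for a
        using prob_mem_random_subset[OF assms(2) d0 d1] .
    qed simp
    then show ?thesis by (simp add: M_def iid_subsets_def E_def p)
  qed
  have hU: "measure_pmf.prob M (\<Union>p\<in>T. E p) \<le> 1/4"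
  proof -
    have "measure_pmf.prob M (\<Union>p\<in>T. E p) \<le> (\<Sum>p\<in>T. measure_pmf.prob M (E p))"
      by (rule measure_pmf.finite_measure_subadditive_finite) (use finT in auto)
    also have "\<dots> \<le> (\<Sum>p\<in>T. \<delta>)" using Eb by (intro sum_mono) auto
    also have "\<dots> = card T * \<delta>" by simp
    also have "\<dots> \<le> real n ^ 2 * \<delta>" using cardT d0 by (intro mult_right_mono) (auto simp: of_nat_le_iff[symmetric] simp del: of_nat_le_iff)
    also have "real n ^ 2 * \<delta> = 1/4" using assms(1) by (simp add: \<delta>_def)
    finally show ?thesis .
  qed
  have "measure_pmf.prob M (- G) \<le> measure_pmf.prob M (E0 \<union> (\<Union>p\<in>T. E p))"
    using sub by (intro measure_pmf.finite_measure_mono) auto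
  also have "\<dots> \<le> measure_pmf.prob M E0 + measure_pmf.prob M (\<Union>p\<in>T. E p)"
    by (rule measure_Un_le) auto
  finally have "measure_pmf.prob M (- G) \<le> 1/4 + 1/4" using E0b hU by linarith
  then show ?thesis using measure_pmf.prob_compl[of "G" M]
    by (simp add: Compl_eq_Diff_UNIV M_def G_def \<delta>_def)
qed

end
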